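(* Let $M>0$, $\mu>0$, $m\in\mathbb{Z}\setminus\{0\}$, $n\in\{0,1,2,\dots\}$ and $l\in\{|m|,|m|+1,\dots\}$, and put $\alpha=\frac{m}{\mu M}$, $\beta=6-\frac{l(l+1)}{\mu^2M^2}$. Suppose $4<\alpha^2<6$ and $\frac{4}{100}<\beta<\frac{165}{100}$. For $a\in(0,M)$ define the polynomial $$p_a(w)=w^4+\frac{\frac{ma}{M}-i(2n+1)\sqrt{1-\frac{a^2}{M^2}}}{\mu M}\,w(w^2-1)+\left[2-\frac{l(l+1)}{\mu^2M^2}\right]w^2+3+2\sqrt{1-\frac{a^2}{M^2}},\quad w\in\mathbb{C}.$$ Then there exists $a_0\in(0,M)$ such that for every $a\in(a_0,M)$ (i.e. for $a$ sufficiently close to $M$), $p_a$ has a root in $\{w\in\mathbb{C}:|w|<1,\ \mathrm{Im}(w)<0\}$. *)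

theory Defs
  imports "HOL-Analysis.Analysis"
begin

definition pa :: "real \<Rightarrow> real \<Rightarrow> int \<Rightarrow> nat \<Rightarrow> nat \<Rightarrow> real \<Rightarrow> complex \<Rightarrow> complex" where
  "pa M \<mu> m n l a w =
     w ^ 4
     + ((complex_of_real (real_of_int m * a / M)
          - \<i> * complex_of_real ((2 * real n + 1) * sqrt (1 - a\<^sup>2 / M\<^sup>2)))
        / complex_of_real (\<mu> * M)) * w * (w\<^sup>2 - 1)
     + complex_of_real (2 - real l * (real l + 1) / (\<mu>\<^sup>2 * M\<^sup>2)) * w\<^sup>2
     + complex_of_real (3 + 2 * sqrt (1 - a\<^sup>2 / M\<^sup>2))"

end

theory Submission imports Defs "HOL-Computational_Algebra.Fundamental_Theorem_Algebra" begin

lemma root_near: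
  fixes p :: "complex poly"
  assumes "lead_coeff p = 1" "degree p = Suc n"
  shows "\<exists>z. poly p z = 0 \<and> cmod (w - z) ^ Suc n \<le> cmod (poly p w)"
  using assms
proof (induction n arbitrary: p)
  case (0 p)
  then have "\<not> constant (poly p)" by (simp add: constant_degree)
  then obtain z where z: "poly p z = 0" using fundamental_theorem_of_algebra by blast
  then obtain q where pq: "p = [:-z,1:] * q" using poly_eq_0_iff_dvd by blast
  have "q \<noteq> 0" using pq 0 by auto
  have dd: "degree p = degree [:-z,1:] + degree q" unfolding pq using \<open>q \<noteq> 0\<close> by (intro degree_mult_eq) auto
  have ll: "lead_coeff p = lead_coeff [:-z,1:] * lead_coeff q" unfolding pq by (rule lead_coeff_mult)
  have dq: "degree q = 0" and lq: "lead_coeff q = 1" using dd ll 0 by auto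
  from dq lq have "q = [:1:]" by (metis degree_0_id one_pCons)
  then show ?case using z pq by (auto simp: norm_minus_commute)
next
  case (Suc n p)
  then have "\<not> constant (poly p)" by (simp add: constant_degree)
  then obtain z where z: "poly p z = 0" using fundamental_theorem_of_algebra by blast
  then obtain q where pq: "p = [:-z,1:] * q" using poly_eq_0_iff_dvd by blast
  have "q \<noteq> 0" using pq Suc by auto
  have dd: "degree p = degree [:-z,1:] + degree q" unfolding pq using \<open>q \<noteq> 0\<close> by (intro degree_mult_eq) auto
  have ll: "lead_coeff p = lead_coeff [:-z,1:] * lead_coeff q" unfolding pq by (rule lead_coeff_mult)
  have dq: "degree q = Suc n" and lq: "lead_coeff q = 1" using dd ll Suc.prems by auto
  obtain z' where z': "poly q z' = 0" "cmod (w - z') ^ Suc n \<le> cmod (poly q w)"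
    using Suc.IH[OF lq dq] by blast
  have pw: "cmod (poly p w) = cmod (w - z) * cmod (poly q w)" using pq by (simp add: norm_mult flip: left_diff_distrib)
  show ?case
  proof (cases "cmod (w - z) \<le> cmod (w - z')")
    case True
    have "cmod (w - z) ^ Suc (Suc n) = cmod (w - z) * cmod (w - z) ^ Suc n" by simp
    also have "\<dots> \<le> cmod (w - z) * cmod (w - z') ^ Suc n"
      by (intro mult_left_mono power_mono True) auto
    also have "\<dots> \<le> cmod (w - z) * cmod (poly q w)" by (intro mult_left_mono z') auto
    finally show ?thesis using z pw by auto
  next
    case False
    have "cmod (w - z') ^ Suc (Suc n) = cmod (w - z') * cmod (w - z') ^ Suc n" by simp
    also have "\<dots> \<le> cmod (w - z) * cmod (w - z') ^ Suc n"
      using False by (intro mult_right_mono) auto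
    also have "\<dots> \<le> cmod (w - z) * cmod (poly q w)" by (intro mult_left_mono z') auto
    finally show ?thesis using z' pw pq by auto
  qed
qed


definition Kf :: "real \<Rightarrow> real \<Rightarrow> real" where
  "Kf A t = A*t*(1+t)^2 - 4*(3-t^2)^2"
definition Hf :: "real \<Rightarrow> real \<Rightarrow> real \<Rightarrow> real" where
  "Hf A b t = A*t^3*(1+t)^2 + A*t^2*(1+t)*(3-t^2) + (b-4-t)*t*(3-t^2)^2 - 3*(3-t^2)^2"

lemma Hf_id: "Hf A b t * (1+t) = Kf A t * (t^2 + 3*t) + (3-t^2)^2 * (b*t*(1+t) - (1-t)^2*(t+3))"
  unfolding Hf_def Kf_def by (simp add: algebra_simps power2_eq_square power3_eq_cube)

lemma Kf_mono:
  assumes "A > 0" "0 \<le> x" "x < y" "y \<le> 1"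
  shows "Kf A x < Kf A y"
proof -
  have "x*(1+x)^2 < y*(1+y)^2"
    using assms by (intro mult_strict_mono power_strict_mono) auto
  hence 1: "A*x*(1+x)^2 < A*y*(1+y)^2" using assms by (simp add: mult.assoc)
  have "x^2 < y^2" using assms by (intro power_strict_mono) auto
  moreover have "y^2 \<le> 1" using assms by (simp add: power_le_one)
  ultimately have "(3-y^2)^2 < (3-x^2)^2" 
    using assms by (intro power_strict_mono) auto
  thus ?thesis using 1 unfolding Kf_def by linarith
qed

lemma core:
  assumes A4: "4 < A" and A6: "A < 6" and b1: "4/100 < b" 
  shows "\<exists>t. 0 < t \<and> t < 1 \<and> Hf A b t = 0 \<and> Kf A t < 0"
proof -
  have "Kf A 0 \<le> 0" "0 \<le> Kf A 1" using A4 by (auto simp: Kf_def)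
  moreover have "continuous_on {0..1} (Kf A)" unfolding Kf_def by (intro continuous_intros)
  ultimately obtain tK where tK: "0 \<le> tK" "tK \<le> 1" "Kf A tK = 0"
    using IVT'[of "Kf A" 0 0 1] by auto
  have lo: "tK > 89/100"
  proof (rule ccontr)
    assume "\<not> tK > 89/100"
    hence le: "tK \<le> 89/100" by simp
    have "tK*(1+tK)^2 \<le> (89/100)*(1+89/100)^2"
      using le tK by (intro mult_mono power_mono) auto
    hence "A*(tK*(1+tK)^2) \<le> 6*((89/100)*(1+89/100)^2)"
      using A6 A4 tK le by (intro mult_mono) auto
    moreover have "tK^2 \<le> (89/100)^2" using le tK by (intro power_mono) auto
    hence "(3 - (89/100)^2)^2 \<le> (3-tK^2)^2" by (intro power_mono) (auto simp: power2_eq_square)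
    moreover have "(6::real)*((89/100)*(1+89/100)^2) < 4*(3 - (89/100)^2)^(2::nat)" by (simp add: power2_eq_square)
    ultimately have "Kf A tK < 0" unfolding Kf_def by (simp only: mult.assoc)
    thus False using tK by simp
  qed
  have "tK \<noteq> 1" using tK A4 by (auto simp: Kf_def)
  hence hi: "tK < 1" using tK by simp
  have "(1-tK)^2 < (11/100)^2" using lo hi by (intro power_strict_mono) auto
  hence "(1-tK)^2*(tK+3) < (11/100)^2 * 4" using lo hi by (intro mult_strict_mono) auto
  moreover have "4/100*(89/100)*(1+89/100) < b*tK*(1+tK)"
    using b1 lo by (intro mult_strict_mono) auto
  moreover have "(11/100::real)^2 * 4 = 484/10000" by (simp add: power2_eq_square)
  ultimately have pos: "b*tK*(1+tK) - (1-tK)^2*(tK+3) > 0" by simp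
  have "tK^2 \<le> 1" using hi lo by (simp add: power_le_one)
  hence "(3-tK^2)^2 > 0" by simp
  hence "Hf A b tK * (1+tK) > 0" using Hf_id[of A b tK] tK pos by simp
  hence Hpos: "Hf A b tK > 0" using lo by (simp add: zero_less_mult_iff)
  have "Hf A b 0 \<le> 0" by (simp add: Hf_def)
  moreover have "continuous_on {0..tK} (Hf A b)" unfolding Hf_def by (intro continuous_intros)
  ultimately obtain ts where ts: "0 \<le> ts" "ts \<le> tK" "Hf A b ts = 0"
    using IVT'[of "Hf A b" 0 0 tK] Hpos tK by auto
  have "ts \<noteq> 0" using ts by (auto simp: Hf_def)
  moreover have "ts \<noteq> tK" using ts Hpos by auto
  ultimately have "0 < ts" "ts < tK" using ts by auto
  hence "Kf A ts < Kf A tK" using A4 hi by (intro Kf_mono) auto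
  thus ?thesis using \<open>0 < ts\<close> \<open>ts < tK\<close> hi ts tK by auto
qed


lemma quart_fact:
  fixes a b sg t w :: "'a::field"
  assumes "t \<noteq> 0" "b = t + 3/t + sg*(a-sg)" "0 - a = (3* sg)/t + t*(a-sg)"
  shows "w^4 + a*w^3 + b*w^2 - a*w + 3 = (w^2+sg*w+t)*(w^2+(a-sg)*w+3/t)"
proof -
  have c: "(w^2+sg*w+t)*(w^2+(a-sg)*w+3/t) = w^4 + a*w^3 + (t + 3/t + sg*(a-sg))*w^2 + (3 * sg/t + t*(a-sg))*w + t*(3/t)"
    by (simp add: algebra_simps power2_eq_square power3_eq_cube power4_eq_xxxx)
  have e: "3 * sg/t + t*(a-sg) = -a" using assms(3) by simp
  have "w^4 + a*w^3 + b*w^2 - a*w + 3 = w^4 + a*w^3 + (t + 3/t + sg*(a-sg))*w^2 + (3 * sg/t + t*(a-sg))*w + t*(3/t)"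
    using assms(1) by (simp only: e assms(2)[symmetric]) simp
  then show ?thesis using c by simp
qed

lemma limit_root:
  fixes \<alpha> \<beta> :: real
  assumes "4 < \<alpha>^2" "\<alpha>^2 < 6" "4/100 < \<beta>"
  shows "\<exists>w0. w0^4 + of_real \<alpha> * w0^3 + of_real (\<beta>-4) * w0^2 - of_real \<alpha> * w0 + 3 = 0
              \<and> cmod w0 < 1 \<and> Im w0 < 0"
proof -
  obtain t where t: "0 < t" "t < 1" "Hf (\<alpha>^2) \<beta> t = 0" "Kf (\<alpha>^2) t < 0"
    using core[OF assms] by blast
  have "t^2 \<le> 1" using t by (simp add: power_le_one)
  hence d: "3 - t^2 > 0" by simp
  define sg where "sg = -\<alpha>*t*(1+t)/(3-t^2)"
  define d where "d = 3 - t^2"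
  have dp: "d > 0" using d d_def by simp
  have sgd: "sg*d = -\<alpha>*t*(1+t)" unfolding sg_def d_def using d by simp
  have "t*d^2*(sg^2 - \<alpha>* sg + \<beta> - 4 - t - 3/t) = t*(sg*d)^2 - \<alpha>*t*d*(sg*d) + (\<beta>-4-t)*t*d^2 - 3*d^2"
    using t(1) by (simp add: field_simps power2_eq_square)
  also have "\<dots> = Hf (\<alpha>^2) \<beta> t" unfolding sgd unfolding Hf_def d_def
    by (simp add: algebra_simps power2_eq_square power3_eq_cube)
  finally have "t*d^2*(sg^2 - \<alpha>* sg + \<beta> - 4 - t - 3/t) = 0" using t by simp
  hence "sg^2 - \<alpha>* sg + \<beta> - 4 - t - 3/t = 0" using t dp by simp
  hence R1: "\<beta> - 4 = t + 3/t + sg*(\<alpha> - sg)" by (simp add: algebra_simps power2_eq_square)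
  have "3 * sg/t + t*(\<alpha>-sg) = (sg*d + t^2*\<alpha>)/t" unfolding d_def using t(1)
    by (simp add: field_simps power2_eq_square)
  also have "\<dots> = -\<alpha>" unfolding sgd using t(1) by (simp add: field_simps power2_eq_square)
  finally have R2: "-\<alpha> = 3 * sg/t + t*(\<alpha>-sg)" by simp
  have "sg^2 = (sg*d)^2 / d^2" using dp by (simp add: power_mult_distrib)
  also have "\<dots> = (\<alpha>^2*t*(1+t)^2) * t / d^2" unfolding sgd by (simp add: power_mult_distrib power2_eq_square)
  also have "\<dots> < (4*d^2) * t / d^2"
    using t dp by (intro divide_strict_right_mono mult_strict_right_mono) (auto simp: Kf_def d_def)
  also have "\<dots> = 4*t" using dp by simp
  finally have ss: "sg^2 < 4*t" .
  define r where "r = sqrt (4*t - sg^2)"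
  have r: "r > 0" "r^2 = 4*t - sg^2" using ss unfolding r_def by auto
  define w0 where "w0 = Complex (-sg/2) (-r/2)"
  have quad: "w0^2 + of_real sg * w0 + of_real t = 0"
    using r(2) by (simp add: complex_eq_iff w0_def power2_eq_square algebra_simps)
  have fact: "w0^4 + of_real \<alpha> * w0^3 + of_real (\<beta>-4) * w0^2 - of_real \<alpha> * w0 + 3
      = (w0^2 + of_real sg * w0 + of_real t)*(w0^2+(of_real \<alpha> - of_real sg)*w0+3/of_real t)"
  proof (rule quart_fact)
    show "complex_of_real t \<noteq> 0" using t by simp
    show "complex_of_real (\<beta> - 4) = of_real t + 3 / of_real t + of_real sg * (of_real \<alpha> - of_real sg)"
      unfolding R1 by simp
    have "complex_of_real (-\<alpha>) = of_real (3* sg/t + t*(\<alpha>-sg))" using R2 by simp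
    thus "0 - complex_of_real \<alpha> = 3 * of_real sg / of_real t + of_real t * (of_real \<alpha> - of_real sg)"
      by simp
  qed
  have "cmod w0 = sqrt (sg^2/4 + r^2/4)" by (simp add: w0_def cmod_def power_divide)
  also have "\<dots> = sqrt t" using r by (simp add: field_simps)
  also have "\<dots> < 1" using t by simp
  finally have "cmod w0 < 1" .
  moreover have "Im w0 < 0" using r by (simp add: w0_def)
  ultimately show ?thesis using fact quad by auto
qed


lemma nuv: "cmod (complex_of_real u - \<i> * complex_of_real v) \<le> \<bar>u\<bar> + \<bar>v\<bar>"
proof -
  have "cmod (complex_of_real u - \<i> * complex_of_real v) \<le> cmod (complex_of_real u) + cmod (\<i> * complex_of_real v)"
    by (rule norm_triangle_ineq4)
  also have "\<dots> = \<bar>u\<bar> + \<bar>v\<bar>" by (simp only: norm_mult norm_of_real norm_ii mult_1)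
  finally show ?thesis .
qed

theorem mainTheorem5:
  fixes M \<mu> :: real and m :: int and n l :: nat
  assumes "M > 0" and "\<mu> > 0" and "m \<noteq> 0"
    and "l \<ge> nat \<bar>m\<bar>"
    and "4 < (real_of_int m / (\<mu> * M))\<^sup>2" and "(real_of_int m / (\<mu> * M))\<^sup>2 < 6"
    and "4/100 < 6 - real l * (real l + 1) / (\<mu>\<^sup>2 * M\<^sup>2)"
    and "6 - real l * (real l + 1) / (\<mu>\<^sup>2 * M\<^sup>2) < 165/100"
  shows "\<exists>a0. 0 < a0 \<and> a0 < M \<and>
           (\<forall>a. a0 < a \<and> a < M \<longrightarrow>
              (\<exists>w. pa M \<mu> m n l a w = 0 \<and> cmod w < 1 \<and> Im w < 0))"
proof -
  define \<alpha> where "\<alpha> = real_of_int m / (\<mu> * M)"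
  define \<beta> where "\<beta> = 6 - real l * (real l + 1) / (\<mu>\<^sup>2 * M\<^sup>2)"
  define e where "e = (\<lambda>a::real. sqrt (1 - a\<^sup>2 / M\<^sup>2))"
  define c where "c = (\<lambda>a. (complex_of_real (real_of_int m * a / M)
          - \<i> * complex_of_real ((2 * real n + 1) * e a)) / complex_of_real (\<mu> * M))"
  define B2 where "B2 = 2 - real l * (real l + 1) / (\<mu>\<^sup>2 * M\<^sup>2)"
  have B2: "B2 = \<beta> - 4" unfolding B2_def \<beta>_def by simp
  have paeq: "pa M \<mu> m n l a w = w^4 + c a * w * (w\<^sup>2 - 1) + of_real B2 * w\<^sup>2 + of_real (3 + 2 * e a)" for a w
    unfolding pa_def c_def e_def B2_def by simp
  have eM: "e M = 0" unfolding e_def using assms(1) by simp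
  have cM: "c M = of_real \<alpha>" unfolding c_def eM \<alpha>_def using assms(1) by simp
  obtain w0 where w0: "w0^4 + of_real \<alpha> * w0^3 + of_real (\<beta>-4) * w0^2 - of_real \<alpha> * w0 + 3 = 0"
     "cmod w0 < 1" "Im w0 < 0"
    using limit_root[of \<alpha> \<beta>] assms(5-7) unfolding \<alpha>_def \<beta>_def by auto
  have pM: "pa M \<mu> m n l M w0 = 0"
    using w0(1) unfolding paeq cM eM B2 by (simp add: algebra_simps power2_eq_square power3_eq_cube power4_eq_xxxx)
  define \<delta> where "\<delta> = min (1 - cmod w0) (- Im w0)"
  have \<delta>: "\<delta> > 0" unfolding \<delta>_def using w0 by simp
  define Cc where "Cc = 2 * (\<bar>real_of_int m\<bar> + (2 * real n + 1)) / (\<mu> * M) + 2"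
  have Cc: "Cc > 0" unfolding Cc_def using assms(1,2) by (simp add: add_pos_nonneg)
  define \<eta> where "\<eta> = min (1/2) (\<delta>^4 / (2 * Cc))"
  have \<eta>: "\<eta> > 0" "\<eta> \<le> 1/2" "\<eta> * Cc \<le> \<delta>^4 / 2"
    unfolding \<eta>_def using \<delta> Cc by (auto simp: min_def field_simps)
  define a0 where "a0 = max (M * (1 - \<eta>)) (M * sqrt (1 - \<eta>^2))"
  have "\<eta>^2 \<le> 1" using \<eta> by (simp add: power_le_one)
  hence sq: "sqrt (1 - \<eta>^2) < 1" "0 \<le> sqrt (1 - \<eta>^2)" using \<eta> by auto
  have "0 < M * (1 - \<eta>)" using assms(1) \<eta> by simp
  moreover have "M * sqrt (1 - \<eta>^2) < M" using assms(1) sq by simp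
  ultimately have a0: "0 < a0" "a0 < M" unfolding a0_def using assms(1) \<eta>
    by (metis less_max_iff_disj, simp)
  have main: "\<exists>w. pa M \<mu> m n l a w = 0 \<and> cmod w < 1 \<and> Im w < 0" if a: "a0 < a" "a < M" for a
  proof -
    have apos: "a > 0" using a a0 by simp
    have Ma: "(M - a) / M < \<eta>" using a assms(1) unfolding a0_def by (simp add: field_simps)
    have "M * sqrt (1 - \<eta>^2) < a" using a unfolding a0_def by simp
    hence "(M * sqrt (1 - \<eta>^2))^2 < a^2" using sq assms(1) by (intro power_strict_mono) auto
    hence "M^2 * (1 - \<eta>^2) < a^2" using \<open>\<eta>^2 \<le> 1\<close> by (simp add: power_mult_distrib)
    hence "1 - a\<^sup>2 / M\<^sup>2 < \<eta>^2" using assms(1) by (simp add: field_simps)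
    hence "sqrt (1 - a\<^sup>2 / M\<^sup>2) < sqrt (\<eta>^2)" by (simp only: real_sqrt_less_iff)
    hence ea: "e a < \<eta>" unfolding e_def using \<eta> by simp
    have "a^2 \<le> M^2" using apos a by (intro power_mono) auto
    hence "a\<^sup>2 / M\<^sup>2 \<le> 1" using assms(1) by simp
    hence ea0: "e a \<ge> 0" unfolding e_def by simp
    have diff: "pa M \<mu> m n l a w0 = (c a - c M) * w0 * (w0\<^sup>2 - 1) + of_real (2 * e a)"
      using pM unfolding paeq eM by (simp add: algebra_simps)
    have "c a - c M = (complex_of_real (real_of_int m * a / M - real_of_int m)
          - \<i> * complex_of_real ((2 * real n + 1) * e a)) / complex_of_real (\<mu> * M)"
      unfolding c_def eM using assms(1) by (simp add: diff_divide_distrib)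
    hence cm1: "cmod (c a - c M) = cmod (complex_of_real (real_of_int m * a / M - real_of_int m)
          - \<i> * complex_of_real ((2 * real n + 1) * e a)) / cmod (complex_of_real (\<mu> * M))"
      by (simp only: norm_divide)
    have "cmod (complex_of_real (\<mu> * M)) = \<mu> * M" using assms(1,2) by (simp only: norm_of_real) simp
    hence "cmod (c a - c M) = cmod (complex_of_real (real_of_int m * a / M - real_of_int m)
          - \<i> * complex_of_real ((2 * real n + 1) * e a)) / (\<mu> * M)" using cm1 by simp
    also have "\<dots> \<le> (\<bar>real_of_int m * a / M - real_of_int m\<bar> + (2 * real n + 1) * e a) / (\<mu> * M)"
      using assms(1,2) ea0 nuv[of "real_of_int m * a / M - real_of_int m" "(2 * real n + 1) * e a"]
      by (intro divide_right_mono) auto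
    also have "\<bar>real_of_int m * a / M - real_of_int m\<bar> = \<bar>real_of_int m\<bar> * ((M - a) / M)"
    proof -
      have "real_of_int m * a / M - real_of_int m = - (real_of_int m * ((M - a) / M))"
        using assms(1) by (simp add: field_simps)
      moreover have "\<bar>(M - a) / M\<bar> = (M - a) / M" using a assms(1) by simp
      ultimately show ?thesis by (simp only: abs_minus_cancel abs_mult)
    qed
    also have "(\<bar>real_of_int m\<bar> * ((M - a) / M) + (2 * real n + 1) * e a) / (\<mu> * M)
        \<le> (\<bar>real_of_int m\<bar> * \<eta> + (2 * real n + 1) * \<eta>) / (\<mu> * M)"
      using assms(1,2) Ma ea by (intro divide_right_mono add_mono mult_left_mono) auto
    finally have cb: "cmod (c a - c M) \<le> (\<bar>real_of_int m\<bar> + (2 * real n + 1)) * \<eta> / (\<mu> * M)"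
      by (simp add: algebra_simps)
    have w1: "cmod w0 \<le> 1" using w0 by simp
    have w2: "cmod (w0\<^sup>2 - 1) \<le> 2"
    proof -
      have "cmod (w0\<^sup>2 - 1) \<le> cmod (w0\<^sup>2) + 1" using norm_triangle_ineq4[of "w0^2" 1] by simp
      also have "cmod (w0\<^sup>2) \<le> 1" using w1 by (simp add: norm_power power_le_one)
      finally show ?thesis by simp
    qed
    have "cmod (pa M \<mu> m n l a w0) \<le> cmod (c a - c M) * cmod w0 * cmod (w0\<^sup>2 - 1) + 2 * e a"
      unfolding diff using ea0 by (intro order.trans[OF norm_triangle_ineq]) (simp add: norm_mult)
    also have "\<dots> \<le> ((\<bar>real_of_int m\<bar> + (2 * real n + 1)) * \<eta> / (\<mu> * M)) * 1 * 2 + 2 * \<eta>"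
      using cb w1 w2 ea ea0 \<eta> assms(1,2) by (intro add_mono mult_mono) auto
    also have "\<dots> = \<eta> * Cc" unfolding Cc_def by (simp add: field_simps)
    also have "\<dots> < \<delta>^4" using \<eta> \<delta> zero_less_power[of \<delta> 4] by linarith
    finally have small: "cmod (pa M \<mu> m n l a w0) < \<delta>^4" .
    define P where "P = [: of_real (3 + 2 * e a), - c a, of_real B2, c a, 1 :]"
    have polyP: "poly P w = pa M \<mu> m n l a w" for w
      unfolding P_def paeq by (simp add: algebra_simps power2_eq_square power3_eq_cube power4_eq_xxxx)
    have "lead_coeff P = 1" "degree P = Suc 3" unfolding P_def by auto
    then obtain z where z: "poly P z = 0" "cmod (w0 - z) ^ Suc 3 \<le> cmod (poly P w0)"
      using root_near by blast
    have "cmod (w0 - z) ^ 4 < \<delta> ^ 4" using z small polyP by simp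
    hence dz: "cmod (w0 - z) < \<delta>" by (rule power_less_imp_less_base) (use \<delta> in simp)
    have "cmod z \<le> cmod w0 + cmod (w0 - z)" using norm_triangle_ineq4[of w0 "w0 - z"] by simp
    hence "cmod z < 1" using dz unfolding \<delta>_def by simp
    moreover have "Im z \<le> Im w0 + cmod (w0 - z)" using abs_Im_le_cmod[of "w0 - z"] by simp
    hence "Im z < 0" using dz unfolding \<delta>_def by simp
    ultimately show ?thesis using z polyP by auto
  qed
  show ?thesis using a0 main by blast
qed

end
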